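(* For every $n\ge 3$ the set $\Theta$ is non-empty; that is, flexible cross-polytopes of type $(n)$ (the simplest type) exist in the Lobachevsky space $\Lambda^n$.
   Context: Let $\Theta\subset\mathbb{R}^{n+\binom n2}$ be the set of pairs $(\boldsymbol{\lambda},G)$, where $\boldsymbol{\lambda}=(\lambda_1,\dots,\lambda_n)$ has nonzero real entries with $\lambda_p\ne\pm\lambda_q$ for $p\ne q$, and $G=(g_{pq})$ is a real symmetric $n\times n$ matrix with units on the diagonal, such that, with $H=(h_{pq})$ defined by $h_{pp}=1$ and $h_{pq}=\frac{2\lambda_p(\lambda_pg_{pq}-\lambda_q)}{\lambda_p^2-\lambda_q^2}$ for $p\ne q$, the following hold: (i) $G$ is non-degenerate indefinite with negative index of inertia $1$, and all principal minors of $G$ of sizes $2\times2,\dots,(n-1)\times(n-1)$ are strictly positive; (ii) $\sum_{q=1}^n\sum_{r=1}^n g^{qr}h_{pq}h_{pr}<0$ for $p=1,\dots,n$, where $(g^{qr})=G^{-1}$. These are exactly the pairs for which the flexible cross-polytope in $\Lambda^n$ with tangents of half dihedral angles at a fixed facet $t_p(x)=\lambda_p x$ is well defined (with vertices $\mathbf{a}_p=a_p\mathbf{c}_p$ and $\mathbf{b}_p(x)=b_p\big(\sum_q h_{pq}\mathbf{c}_q-\frac{2\lambda_p^2x^2}{\lambda_p^2x^2+1}\mathbf{n}_p+\frac{2\lambda_px}{\lambda_p^2x^2+1}\mathbf{m}\big)$, where $\mathbf{n}_p$ have Gram matrix $G$, $\mathbf{c}_p$ is the dual basis, $\mathbf{m}$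 is a unit vector orthogonal to all $\mathbf{n}_p$, and $a_p=\pm(-g^{pp})^{-1/2}$, $b_p=\pm(-\sum_{q,r}g^{qr}h_{pq}h_{pr})^{-1/2}$). *)

theory Defs
  imports "Jordan_Normal_Form.Determinant" "Jordan_Normal_Form.Char_Poly" "Jordan_Normal_Form.DL_Submatrix"
begin

(* Indices p, q range over {0..<n} (the paper's 1..n). *)

definition H_mat :: "nat \<Rightarrow> (nat \<Rightarrow> real) \<Rightarrow> real mat \<Rightarrow> real mat" where
  "H_mat n lam G = mat n n (\<lambda>(p,q). if p = q then 1
      else 2 * lam p * (lam p * G $$ (p,q) - lam q) / ((lam p)\<^sup>2 - (lam q)\<^sup>2))"

definition neg_inertia :: "real mat \<Rightarrow> nat" where
  "neg_inertia A = (\<Sum>x\<in>{x. x < 0 \<and> poly (char_poly A) x = 0}. order x (char_poly A))"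

definition pos_inertia :: "real mat \<Rightarrow> nat" where
  "pos_inertia A = (\<Sum>x\<in>{x. x > 0 \<and> poly (char_poly A) x = 0}. order x (char_poly A))"

definition in_Theta :: "nat \<Rightarrow> (nat \<Rightarrow> real) \<Rightarrow> real mat \<Rightarrow> bool" where
  "in_Theta n lam G \<longleftrightarrow>
     (\<forall>p<n. lam p \<noteq> 0) \<and>
     (\<forall>p<n. \<forall>q<n. p \<noteq> q \<longrightarrow> lam p \<noteq> lam q \<and> lam p \<noteq> - lam q) \<and>
     G \<in> carrier_mat n n \<and> G\<^sup>T = G \<and> (\<forall>p<n. G $$ (p,p) = 1) \<and>
     \<comment> \<open>(i)\<close>
     det G \<noteq> 0 \<and> pos_inertia G > 0 \<and> neg_inertia G = 1 \<and>
     (\<forall>S. S \<subseteq> {0..<n} \<longrightarrow> 2 \<le> card S \<longrightarrow> card S \<le> n - 1 \<longrightarrow> det (submatrix G S S) > 0) \<and>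
     \<comment> \<open>(ii), with Ginv = G^{-1}\<close>
     (\<exists>Ginv \<in> carrier_mat n n. G * Ginv = 1\<^sub>m n \<and> Ginv * G = 1\<^sub>m n \<and>
        (\<forall>p<n. (\<Sum>q<n. \<Sum>r<n. Ginv $$ (q,r) * H_mat n lam G $$ (p,q) * H_mat n lam G $$ (p,r)) < 0))"

definition Theta :: "nat \<Rightarrow> ((nat \<Rightarrow> real) \<times> real mat) set" where
  "Theta n = {(lam, G). in_Theta n lam G}"

end

theory Submission
  imports Defs
begin

definition arr :: "real \<Rightarrow> real \<Rightarrow> real \<Rightarrow> nat \<Rightarrow> real mat" where
  "arr d e w k = mat k k (\<lambda>(i,j). if i = j then (if i = k - 1 then e else d)
      else if i = k - 1 \<or> j = k - 1 then w else 0)"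

lemma prod_list_diag_mat_eq: "A \<in> carrier_mat k k \<Longrightarrow> prod_list (diag_mat A) = (\<Prod>i<k. A $$ (i,i))"
  by (simp add: prod_list_diag_prod atLeast0LessThan)

lemma det_arr:
  assumes d: "d \<noteq> 0"
  shows "det (arr d e w (Suc m)) = d ^ m * (e - real m * w^2 / d)"
proof -
  define L where "L = mat (Suc m) (Suc m) (\<lambda>(i,j). if i = j then 1 else if i = m \<and> j < m then w / d else (0::real))"
  define U where "U = mat (Suc m) (Suc m) (\<lambda>(i,j). if i = j then (if i = m then e - real m * w^2 / d else d)
      else if j = m \<and> i < m then w else (0::real))"
  have LU: "L * U = arr d e w (Suc m)"
  proof (rule eq_matI)
    fix i j assume i: "i < dim_row (arr d e w (Suc m))" and j: "j < dim_col (arr d e w (Suc m))"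
    hence i: "i < Suc m" and j: "j < Suc m" by (auto simp: arr_def)
    have "(L * U) $$ (i,j) = (\<Sum>l<Suc m. L $$ (i,l) * U $$ (l,j))"
      using i j by (simp add: L_def U_def scalar_prod_def atLeast0LessThan)
    also have "\<dots> = (\<Sum>l<m. L $$ (i,l) * U $$ (l,j)) + L $$ (i,m) * U $$ (m,j)"
      by simp
    also have "\<dots> = arr d e w (Suc m) $$ (i,j)"
    proof (cases "i = m")
      case True
      have "(\<Sum>l<m. L $$ (i,l) * U $$ (l,j)) = (\<Sum>l<m. w / d * U $$ (l,j))"
        using True by (intro sum.cong) (auto simp: L_def)
      also have "\<dots> = (if j = m then real m * (w/d) * w else w)"
      proof (cases "j = m")
        case True
        then have "(\<Sum>l<m. w / d * U $$ (l,j)) = (\<Sum>l<m. w / d * w)"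
          by (intro sum.cong) (auto simp: U_def)
        then show ?thesis using True by simp
      next
        case False
        with j have jm: "j < m" by simp
        have "(\<Sum>l<m. w / d * U $$ (l,j)) = (\<Sum>l<m. if l = j then w / d * d else 0)"
          using jm by (intro sum.cong) (auto simp: U_def)
        also have "\<dots> = w" using jm d by simp
        finally show ?thesis using False by simp
      qed
      finally show ?thesis using True i j d
        by (auto simp: L_def U_def arr_def power2_eq_square field_simps)
    next
      case False
      with i have im: "i < m" by simp
      have "(\<Sum>l<m. L $$ (i,l) * U $$ (l,j)) = (\<Sum>l<m. if l = i then U $$ (i,j) else 0)"
        using im by (intro sum.cong) (auto simp: L_def)
      also have "\<dots> = U $$ (i,j)" using im by simp
      finally show ?thesis using im i j by (auto simp: L_def U_def arr_def)
    qed
    finally show "(L * U) $$ (i,j) = arr d e w (Suc m) $$ (i,j)" .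
  qed (auto simp: L_def U_def arr_def)
  have L: "L \<in> carrier_mat (Suc m) (Suc m)" and U: "U \<in> carrier_mat (Suc m) (Suc m)"
    by (auto simp: L_def U_def)
  have "det L = prod_list (diag_mat L)"
    by (rule det_lower_triangular[OF _ L]) (auto simp: L_def)
  also have "\<dots> = (\<Prod>i<Suc m. L $$ (i,i))" by (rule prod_list_diag_mat_eq[OF L])
  also have "\<dots> = 1" by (intro prod.neutral) (auto simp: L_def)
  finally have dL: "det L = 1" .
  have "det U = prod_list (diag_mat U)"
    by (rule det_upper_triangular[OF _ U]) (auto simp: upper_triangular_def U_def)
  also have "\<dots> = (\<Prod>i<Suc m. U $$ (i,i))" by (rule prod_list_diag_mat_eq[OF U])
  also have "\<dots> = (\<Prod>i<m. U $$ (i,i)) * (e - real m * w^2 / d)" by (simp add: U_def)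
  also have "(\<Prod>i<m. U $$ (i,i)) = (\<Prod>i<m. d)" by (intro prod.cong) (auto simp: U_def)
  finally have dU: "det U = d ^ m * (e - real m * w^2 / d)" by simp
  show ?thesis using det_mult[OF L U] LU dL dU by simp
qed


lemma card_less_S:
  assumes "S \<subseteq> {0..<n}" shows "{i. i < n \<and> i \<in> S} = S"
  using assms by auto

lemma submatrix_arr:
  assumes S: "S \<subseteq> {0..<n}" and n: "n \<ge> 1"
  shows "submatrix (arr 1 1 g n) S S = arr 1 1 (if n - 1 \<in> S then g else 0) (card S)"
proof -
  have fS: "finite S" using S finite_subset by blast
  have dims: "card {i. i < dim_row (arr 1 1 g n) \<and> i \<in> S} = card S"
             "card {i. i < dim_col (arr 1 1 g n) \<and> i \<in> S} = card S"
    using card_less_S[OF S] by (auto simp: arr_def)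
  have pk: "pick S i < n" "pick S i \<in> S" if "i < card S" for i
    using pick_in_set[of i S] that S by auto
  have pinj: "pick S i = pick S j \<longleftrightarrow> i = j" if "i < card S" "j < card S" for i j
    using pick_mono[of j S i] pick_mono[of i S j] that by (metis nat_neq_iff less_irrefl)
  have pl: "pick S i = n - 1 \<longleftrightarrow> (n - 1 \<in> S \<and> i = card S - 1)" if i: "i < card S" for i
  proof
    assume a: "pick S i = n - 1"
    hence inS: "n - 1 \<in> S" using pk[OF i] by simp
    have "{a\<in>S. a < n - 1} = S - {n - 1}" using S n by auto
    hence "card {a\<in>S. a < n - 1} = card S - 1" using inS fS by simp
    moreover have "card {a\<in>S. a < pick S i} = i" using card_pick[of i S] i by simp
    ultimately show "n - 1 \<in> S \<and> i = card S - 1" using a inS by simp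
  next
    assume a: "n - 1 \<in> S \<and> i = card S - 1"
    have "{a\<in>S. a < n - 1} = S - {n - 1}" using S n by auto
    hence "card {a\<in>S. a < n - 1} = card S - 1" using a fS by simp
    with pick_card_in_set[of "n - 1" S] a show "pick S i = n - 1" by simp
  qed
  show ?thesis
  proof (rule eq_matI)
    fix i j assume i: "i < dim_row (arr 1 1 (if n - 1 \<in> S then g else 0) (card S))"
      and j: "j < dim_col (arr 1 1 (if n - 1 \<in> S then g else 0) (card S))"
    hence i: "i < card S" and j: "j < card S" by (auto simp: arr_def)
    have "submatrix (arr 1 1 g n) S S $$ (i,j) = arr 1 1 g n $$ (pick S i, pick S j)"
      by (rule submatrix_index) (use dims i j in auto)
    also have "\<dots> = arr 1 1 (if n - 1 \<in> S then g else 0) (card S) $$ (i,j)"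
      using pk[OF i] pk[OF j] pinj[OF i j] pl[OF i] pl[OF j] i j by (auto simp: arr_def)
    finally show "submatrix (arr 1 1 g n) S S $$ (i,j) = arr 1 1 (if n - 1 \<in> S then g else 0) (card S) $$ (i,j)" .
  qed (use dims in \<open>auto simp: arr_def submatrix_def\<close>)
qed

lemma det_arr1:
  assumes "k \<ge> 1" shows "det (arr 1 1 w k) = 1 - real (k - 1) * w^2"
  using det_arr[of 1 1 w "k - 1"] assms by simp


lemma char_poly_arr:
  assumes n: "n \<ge> 2" and r: "r^2 = real (n - 1) * g^2"
  shows "char_poly (arr 1 1 g n) = [:-1,1:]^(n-2) * ([:-(1+r),1:] * [:-(1-r),1:])"
    (is "?c = ?P")
proof -
  have A: "arr 1 1 g n \<in> carrier_mat n n" by (simp add: arr_def)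
  have ev: "poly ?c x = poly ?P x" if x: "x \<noteq> 1" for x
  proof -
    have "poly ?c x = det (- char_matrix (arr 1 1 g n) x)" by (rule char_poly_matrix[OF A])
    also have "- char_matrix (arr 1 1 g n) x = arr (x - 1) (x - 1) (- g) (Suc (n - 1))"
      by (rule eq_matI) (use n in \<open>auto simp: arr_def char_matrix_def\<close>)
    also have "det \<dots> = (x - 1) ^ (n - 1) * ((x - 1) - real (n - 1) * (-g)^2 / (x - 1))"
      by (rule det_arr) (use x in simp)
    also have "\<dots> = (x - 1) ^ (n - 2) * ((x - 1)^2 - r^2)"
    proof -
      have e: "n - 1 = Suc (n - 2)" using n by simp
      show ?thesis using x unfolding e r by (simp add: field_simps power2_eq_square)
    qed
    also have "\<dots> = poly ?P x" by (simp add: algebra_simps power2_eq_square)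
    finally show ?thesis .
  qed
  show ?thesis
  proof (rule ccontr)
    assume ne: "?c \<noteq> ?P"
    hence "?c - ?P \<noteq> 0" by simp
    hence fin: "finite {x. poly (?c - ?P) x = 0}" by (rule poly_roots_finite)
    have "UNIV - {1::real} \<subseteq> {x. poly (?c - ?P) x = 0}" using ev by auto
    hence "finite (UNIV - {1::real})" using fin finite_subset by blast
    thus False using infinite_UNIV_char_0[where 'a=real] by simp
  qed
qed


lemma inertia_arr:
  assumes n: "n \<ge> 3" and r: "r^2 = real (n - 1) * g^2" and r1: "r > 1"
  shows "neg_inertia (arr 1 1 g n) = 1" "pos_inertia (arr 1 1 g n) > 0"
proof -
  define P where "P = [:-1,1:]^(n-2) * ([:-(1+r),1:] * [:-(1-r),(1::real):])"
  have c: "char_poly (arr 1 1 g n) = P" unfolding P_def by (rule char_poly_arr) (use n r in auto)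
  have P0: "P \<noteq> 0" unfolding P_def by (metis mult_eq_0_iff power_eq_0_iff pCons_eq_0_iff one_neq_zero)
  have roots: "poly P x = 0 \<longleftrightarrow> x = 1 \<or> x = 1 + r \<or> x = 1 - r" for x
  proof -
    have lin: "poly [:-a,1:] x = x - a" for a by simp
    have "poly P x = (x - 1)^(n-2) * ((x - (1 + r)) * (x - (1 - r)))"
      unfolding P_def poly_mult poly_power lin by simp
    thus ?thesis using n by auto
  qed
  have neg: "{x. x < 0 \<and> poly P x = 0} = {1 - r}" using roots r1 by auto
  have "order (1 - r) P = order (1 - r) ([:-1,1:]^(n-2) * [:-(1+r),1:]) + order (1 - r) [:-(1-r),1:]"
    using P0 unfolding P_def mult.assoc[symmetric] by (rule order_mult)
  also have "order (1 - r) ([:-1,1:]^(n-2) * [:-(1+r),1:]) = 0"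
  proof (rule order_0I)
    have lin: "poly [:-a,1:] x = x - a" for a x :: real by simp
    show "poly ([:-1,1:]^(n-2) * [:-(1+r),1:]) (1 - r) \<noteq> 0"
      unfolding poly_mult poly_power lin using r1 by simp
  qed
  also have "order (1 - r) [:-(1-r),1:] = 1" using order_power_n_n[of "1 - r" 1] by simp
  finally have o1: "order (1 - r) P = 1" by simp
  show "neg_inertia (arr 1 1 g n) = 1" unfolding neg_inertia_def c neg using o1 by simp
  have fin: "finite {x. x > 0 \<and> poly P x = 0}"
    using poly_roots_finite[OF P0] by (rule rev_finite_subset) auto
  have mem: "1 + r \<in> {x. x > 0 \<and> poly P x = 0}" using roots r1 by auto
  have "order (1 + r) P > 0" using P0 mem order_root[of P "1 + r"] by auto
  also have "order (1 + r) P \<le> (\<Sum>x\<in>{x. x > 0 \<and> poly P x = 0}. order x P)"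
    by (rule member_le_sum[OF mem _ fin]) auto
  finally show "pos_inertia (arr 1 1 g n) > 0" unfolding pos_inertia_def c .
qed


definition uu :: "nat \<Rightarrow> real \<Rightarrow> nat \<Rightarrow> real" where
  "uu n g q = (if q = n - 1 then -1 else g)"

definition Ginv :: "nat \<Rightarrow> real \<Rightarrow> real mat" where
  "Ginv n g = mat n n (\<lambda>(q,r). (if q = r \<and> q < n - 1 then 1 else 0) - (2 * real n - 3) * uu n g q * uu n g r)"

lemma arr_Ginv:
  assumes n: "n \<ge> 2" and g: "g^2 * (2 * real n - 3) = 2"
  shows "arr 1 1 g n * Ginv n g = 1\<^sub>m n"
proof (rule eq_matI)
  fix i j assume i: "i < dim_row (1\<^sub>m n)" and j: "j < dim_col (1\<^sub>m n)"
  hence i: "i < n" and j: "j < n" by auto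
  define m where "m = n - 1"
  have nm: "n = Suc m" using n m_def by simp
  let ?A = "arr 1 1 g n" and ?B = "Ginv n g"
  have "(?A * ?B) $$ (i,j) = (\<Sum>k<Suc m. ?A $$ (i,k) * ?B $$ (k,j))"
    using i j by (simp add: arr_def Ginv_def scalar_prod_def atLeast0LessThan nm)
  also have "\<dots> = (\<Sum>k<m. ?A $$ (i,k) * ?B $$ (k,j)) + ?A $$ (i,m) * ?B $$ (m,j)" by simp
  also have "\<dots> = 1\<^sub>m n $$ (i,j)"
  proof (cases "i = m")
    case True
    have "(\<Sum>k<m. ?A $$ (i,k) * ?B $$ (k,j)) = (\<Sum>k<m. (if k = j then g else 0) - g * (2 * real n - 3) * g * uu n g j)"
      using True j by (intro sum.cong) (auto simp: arr_def Ginv_def nm uu_def algebra_simps)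
    also have "\<dots> = (\<Sum>k<m. (if k = j then g else 0)) - (\<Sum>k<m. g * (2 * real n - 3) * g * uu n g j)"
      by (rule sum_subtractf)
    also have "(\<Sum>k<m. (if k = j then g else 0)) = g * (if j < m then 1 else 0)" by simp
    also have "(\<Sum>k<m. g * (2 * real n - 3) * g * uu n g j) = real m * g * (2 * real n - 3) * g * uu n g j" by simp
    finally have s: "(\<Sum>k<m. ?A $$ (i,k) * ?B $$ (k,j)) = g * (if j < m then 1 else 0) - real m * g * (2 * real n - 3) * g * uu n g j" .
    have e: "real m * g^2 * (2 * real n - 3) = (2 * real n - 3) + 1"
    proof -
      have "real m = real n - 1" using nm by simp
      thus ?thesis using g by (simp add: algebra_simps)
    qed
    show ?thesis
    proof (cases "j = m")
      case True
      then show ?thesis using s `i = m` e i j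
        by (auto simp: arr_def Ginv_def nm uu_def power2_eq_square algebra_simps)
    next
      case False
      with j nm have jm: "j < m" by simp
      show ?thesis using s `i = m` e i j jm
        by (auto simp: arr_def Ginv_def nm uu_def power2_eq_square algebra_simps)
    qed
  next
    case False
    with i nm have im: "i < m" by simp
    have "(\<Sum>k<m. ?A $$ (i,k) * ?B $$ (k,j)) = (\<Sum>k<m. if k = i then ?B $$ (i,j) else 0)"
      using im j by (intro sum.cong) (auto simp: arr_def nm)
    also have "\<dots> = ?B $$ (i,j)" using im by simp
    finally show ?thesis using im i j
      by (auto simp: arr_def Ginv_def nm uu_def algebra_simps)
  qed
  finally show "(?A * ?B) $$ (i,j) = 1\<^sub>m n $$ (i,j)" .
qed (auto simp: arr_def Ginv_def)


lemma Ginv_G: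
  assumes n: "n \<ge> 2" and g: "g^2 * (2 * real n - 3) = 2"
  shows "Ginv n g * arr 1 1 g n = 1\<^sub>m n"
proof -
  have A: "arr 1 1 g n \<in> carrier_mat n n" and B: "Ginv n g \<in> carrier_mat n n"
    by (auto simp: arr_def Ginv_def)
  have tA: "transpose_mat (arr 1 1 g n) = arr 1 1 g n"
    by (rule eq_matI) (auto simp: arr_def)
  have tB: "transpose_mat (Ginv n g) = Ginv n g"
    by (rule eq_matI) (auto simp: Ginv_def)
  have "transpose_mat (arr 1 1 g n * Ginv n g) = transpose_mat (Ginv n g) * transpose_mat (arr 1 1 g n)"
    by (rule transpose_mult[OF A B])
  thus ?thesis using arr_Ginv[OF n g] tA tB by simp
qed

lemma quad_Ginv:
  fixes h :: "nat \<Rightarrow> real"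
  shows "(\<Sum>q<n. \<Sum>r<n. Ginv n g $$ (q,r) * h q * h r)
     = (\<Sum>q<n - 1. (h q)^2) - (2 * real n - 3) * (\<Sum>q<n. uu n g q * h q)^2"
proof -
  have "(\<Sum>q<n. \<Sum>r<n. Ginv n g $$ (q,r) * h q * h r)
     = (\<Sum>q<n. \<Sum>r<n. (if q = r \<and> q < n - 1 then h q * h r else 0) - (2 * real n - 3) * ((uu n g q * h q) * (uu n g r * h r)))"
    by (intro sum.cong refl) (auto simp: Ginv_def algebra_simps)
  also have "\<dots> = (\<Sum>q<n. \<Sum>r<n. (if q = r \<and> q < n - 1 then h q * h r else 0)) - (\<Sum>q<n. \<Sum>r<n. (2 * real n - 3) * ((uu n g q * h q) * (uu n g r * h r)))"
    by (simp only: sum_subtractf)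
  also have "(\<Sum>q<n. \<Sum>r<n. (if q = r \<and> q < n - 1 then h q * h r else 0)) = (\<Sum>q<n. (if q < n - 1 then (h q)^2 else 0))"
  proof (intro sum.cong refl)
    fix q assume "q \<in> {..<n}"
    have "(\<Sum>r<n. (if q = r \<and> q < n - 1 then h q * h r else 0)) = (\<Sum>r<n. (if r = q then (if q < n - 1 then h q * h q else 0) else 0))"
      by (intro sum.cong refl) auto
    also have "\<dots> = (if q < n - 1 then (h q)^2 else 0)" using \<open>q \<in> {..<n}\<close> by (simp add: power2_eq_square)
    finally show "(\<Sum>r<n. (if q = r \<and> q < n - 1 then h q * h r else 0)) = (if q < n - 1 then (h q)^2 else 0)" .
  qed
  also have "(\<Sum>q<n. \<Sum>r<n. (2 * real n - 3) * ((uu n g q * h q) * (uu n g r * h r))) = (2 * real n - 3) * ((\<Sum>q<n. uu n g q * h q) * (\<Sum>r<n. uu n g r * h r))"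
    by (subst sum_product) (simp add: sum_distrib_left)
  also have "(\<Sum>q<n. (if q < n - 1 then (h q)^2 else 0)) = (\<Sum>q<n - 1. (h q)^2)"
    by (rule sum.mono_neutral_cong_right) auto
  finally show ?thesis by (simp add: power2_eq_square)
qed


lemma sum_abs_le:
  fixes f :: "nat \<Rightarrow> real"
  assumes "\<And>q. q < m \<Longrightarrow> \<bar>f q\<bar> \<le> e"
  shows "\<bar>\<Sum>q<m. f q\<bar> \<le> real m * e"
proof -
  have "\<bar>\<Sum>q<m. f q\<bar> \<le> (\<Sum>q<m. \<bar>f q\<bar>)" by (rule sum_abs)
  also have "\<dots> \<le> (\<Sum>q<m. e)" by (rule sum_mono) (use assms in auto)
  finally show ?thesis by simp
qed

lemma rowQ_other:
  fixes x :: "nat \<Rightarrow> real"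
  assumes p: "p < m" and xp: "x p = 1"
    and xq: "\<And>q. q < m \<Longrightarrow> q \<noteq> p \<Longrightarrow> \<bar>x q\<bar> \<le> e"
    and xm: "\<bar>x m - 2 * g\<bar> \<le> e"
    and e0: "0 \<le> e" and g0: "0 \<le> g" and g1: "g \<le> 1" and c0: "c > 0" and cg: "c * g^2 = 2"
    and small: "real m * e^2 + 2 * c * real (Suc m) * e < 1"
  shows "(\<Sum>q<m. (x q)^2) - c * (g * (\<Sum>q<m. x q) - x m)^2 < 0"
proof -
  have A: "(\<Sum>q<m. (x q)^2) \<le> 1 + real m * e^2"
  proof -
    have "(\<Sum>q<m. (x q)^2) \<le> (\<Sum>q<m. (if q = p then 1 else 0) + e^2)"
    proof (rule sum_mono)
      fix q assume "q \<in> {..<m}"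
      show "(x q)^2 \<le> (if q = p then 1 else 0) + e^2"
      proof (cases "q = p")
        case True thus ?thesis using xp by simp
      next
        case False
        hence "\<bar>x q\<bar> \<le> e" using xq \<open>q \<in> {..<m}\<close> by auto
        hence "(x q)^2 \<le> e^2" using abs_le_square_iff by (metis abs_of_nonneg e0)
        thus ?thesis using False by simp
      qed
    qed
    also have "\<dots> = 1 + real m * e^2" using p by (simp add: sum.distrib)
    finally show ?thesis .
  qed
  have T: "\<bar>(\<Sum>q<m. x q) - 1\<bar> \<le> real m * e"
  proof -
    have "(\<Sum>q<m. x q) - 1 = (\<Sum>q<m. x q - (if q = p then 1 else 0))"
      using p by (simp add: sum_subtractf)
    also have "\<bar>\<dots>\<bar> \<le> real m * e"
      by (rule sum_abs_le) (use xq xp e0 in auto)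
    finally show ?thesis .
  qed
  define S where "S = g * (\<Sum>q<m. x q) - x m"
  have d: "\<bar>S + g\<bar> \<le> real (Suc m) * e"
  proof -
    have "S + g = g * ((\<Sum>q<m. x q) - 1) - (x m - 2 * g)" by (simp add: S_def algebra_simps)
    hence "\<bar>S + g\<bar> \<le> g * \<bar>(\<Sum>q<m. x q) - 1\<bar> + \<bar>x m - 2 * g\<bar>"
      using g0 abs_triangle_ineq4[of "g * ((\<Sum>q<m. x q) - 1)" "x m - 2 * g"] by (simp add: abs_mult)
    also have "\<dots> \<le> 1 * (real m * e) + e"
      using T xm g0 g1 by (intro add_mono mult_mono) auto
    finally show ?thesis by (simp add: algebra_simps)
  qed
  have S2: "S^2 \<ge> g^2 - 2 * (real (Suc m) * e)"
  proof -
    define dd where "dd = S + g"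
    have "S^2 = g^2 - 2 * g * dd + dd^2" by (simp add: dd_def power2_eq_square algebra_simps)
    moreover have "g * dd \<le> real (Suc m) * e"
    proof -
      have "g * dd \<le> g * \<bar>dd\<bar>" using g0 by (simp add: mult_left_mono)
      also have "\<dots> \<le> 1 * \<bar>dd\<bar>" using g1 by (intro mult_right_mono) auto
      finally show ?thesis using d dd_def by simp
    qed
    ultimately show ?thesis using zero_le_power2[of dd] by linarith
  qed
  have "c * S^2 \<ge> c * (g^2 - 2 * (real (Suc m) * e))" using S2 c0 by simp
  hence "c * S^2 \<ge> 2 - 2 * c * real (Suc m) * e" using cg by (simp add: algebra_simps)
  thus ?thesis using A small unfolding S_def by linarith
qed

lemma rowQ_last:
  fixes x :: "nat \<Rightarrow> real"
  assumes xq: "\<And>q. q < m \<Longrightarrow> \<bar>x q\<bar> \<le> e"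
    and e0: "0 \<le> e" and g0: "0 \<le> g" and g1: "g \<le> 1" and c0: "c > 0"
    and small: "real m * e^2 + 2 * c * real m * e < c"
  shows "(\<Sum>q<m. (x q)^2) - c * (g * (\<Sum>q<m. x q) - 1)^2 < 0"
proof -
  have A: "(\<Sum>q<m. (x q)^2) \<le> real m * e^2"
  proof -
    have "(\<Sum>q<m. (x q)^2) \<le> (\<Sum>q<m. e^2)"
    proof (rule sum_mono)
      fix q assume "q \<in> {..<m}"
      hence "\<bar>x q\<bar> \<le> e" using xq by auto
      thus "(x q)^2 \<le> e^2" using abs_le_square_iff by (metis abs_of_nonneg e0)
    qed
    thus ?thesis by simp
  qed
  have T: "\<bar>\<Sum>q<m. x q\<bar> \<le> real m * e" by (rule sum_abs_le) (use xq in auto)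
  define dd where "dd = g * (\<Sum>q<m. x q)"
  have dd: "\<bar>dd\<bar> \<le> real m * e"
  proof -
    have "\<bar>dd\<bar> = g * \<bar>\<Sum>q<m. x q\<bar>" using g0 by (simp add: dd_def abs_mult)
    also have "\<dots> \<le> 1 * (real m * e)" using T g0 g1 by (intro mult_mono) auto
    finally show ?thesis by simp
  qed
  have "(dd - 1)^2 = 1 - 2 * dd + dd^2" by (simp add: power2_eq_square algebra_simps)
  hence S2: "(dd - 1)^2 \<ge> 1 - 2 * (real m * e)" using dd zero_le_power2[of dd] abs_le_iff[of dd] by linarith
  have "c * (dd - 1)^2 \<ge> c * (1 - 2 * (real m * e))" using S2 c0 by simp
  thus ?thesis using A small unfolding dd_def[symmetric] by (simp add: algebra_simps)
qed




lemma hb1_aux: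
  fixes a b N :: real
  assumes a: "0 < a" and ab: "N * a \<le> b" and N: "1 < N"
  shows "\<bar>2 * a * (a * 0 - b) / (a^2 - b^2)\<bar> \<le> 2 / (N - 1)"
proof -
  have "a < N * a" using a N by simp
  hence b: "a < b" using ab by linarith
  have pos: "b^2 - a^2 > 0" using a b by (simp add: power_strict_mono)
  have e: "\<bar>2 * a * (a * 0 - b) / (a^2 - b^2)\<bar> = 2 * a * b / (b^2 - a^2)"
  proof -
    have "2 * a * (a * 0 - b) / (a^2 - b^2) = (- (2 * a * b)) / (- (b^2 - a^2))" by simp
    also have "\<dots> = 2 * a * b / (b^2 - a^2)" by (rule minus_divide_divide)
    thus ?thesis using a b pos by simp
  qed
  have key: "a * b * (N - 1) \<le> b^2 - a^2"
  proof -
    have "b^2 - a^2 - a * b * (N - 1) = b * (b - N * a) + a * (b - a)" by (simp add: power2_eq_square algebra_simps)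
    moreover have "b * (b - N * a) \<ge> 0" using ab a b by simp
    moreover have "a * (b - a) \<ge> 0" using a b by simp
    ultimately show ?thesis by linarith
  qed
  have "2 * a * b / (b^2 - a^2) \<le> 2 / (N - 1)"
    using key pos N by (simp add: divide_simps algebra_simps)
  thus ?thesis using e by simp
qed

lemma hb1:
  fixes a b N :: real
  assumes a: "0 < a" and b: "0 < b" and ab: "N * a \<le> b \<or> N * b \<le> a" and N: "1 < N"
  shows "\<bar>2 * a * (a * 0 - b) / (a^2 - b^2)\<bar> \<le> 2 / (N - 1)"
  using ab
proof
  assume "N * a \<le> b" thus ?thesis using hb1_aux a N by blast
next
  assume "N * b \<le> a"
  hence "\<bar>2 * b * (b * 0 - a) / (b^2 - a^2)\<bar> \<le> 2 / (N - 1)" using hb1_aux b N by blast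
  moreover have "\<bar>2 * b * (b * 0 - a) / (b^2 - a^2)\<bar> = \<bar>2 * a * (a * 0 - b) / (a^2 - b^2)\<bar>"
  proof -
    have "2 * b * (b * 0 - a) / (b^2 - a^2) = - (2 * a * b) / (b^2 - a^2)" by simp
    moreover have "2 * a * (a * 0 - b) / (a^2 - b^2) = (- (2 * a * b)) / (- (b^2 - a^2))" by simp
    moreover have "(- (2 * a * b)) / (- (b^2 - a^2)) = - (- (2 * a * b) / (b^2 - a^2))" by (rule divide_minus_right)
    ultimately have "2 * b * (b * 0 - a) / (b^2 - a^2) = - (2 * a * (a * 0 - b) / (a^2 - b^2))" by (metis minus_minus)
    thus ?thesis by (metis abs_minus_cancel)
  qed
  ultimately show ?thesis by simp
qed

lemma hb3:
  fixes L N g :: real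
  assumes N: "1 < N" and L: "N \<le> L" and g0: "0 \<le> g" and g1: "g \<le> 1"
  shows "\<bar>2 * (g - L) / (L^2 - 1)\<bar> \<le> 2 / (N - 1)"
proof -
  have L1: "L > 1" using N L by simp
  have pos: "L^2 - 1 > 0"
  proof -
    have "L^2 - 1 = (L - 1) * (L + 1)" by (simp add: power2_eq_square algebra_simps)
    thus ?thesis using L1 by simp
  qed
  have "\<bar>2 * (g - L) / (L^2 - 1)\<bar> = 2 * (L - g) / (L^2 - 1)" using pos g1 L1 by (simp add: abs_div)
  also have "\<dots> \<le> 2 / (N - 1)"
  proof -
    have "(L - g) * (N - 1) \<le> L * (L - 1)" using g0 L N L1 by (intro mult_mono) auto
    also have "\<dots> \<le> L^2 - 1" using L1 by (simp add: power2_eq_square algebra_simps)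
    finally show ?thesis using pos N by (simp add: divide_simps) (simp add: algebra_simps)
  qed
  finally show ?thesis .
qed

lemma hb2:
  fixes L N g :: real
  assumes N: "1 < N" and L: "N \<le> L" and g0: "0 \<le> g" and g1: "g \<le> 1"
  shows "\<bar>2 * L * (L * g - 1) / (L^2 - 1) - 2 * g\<bar> \<le> 2 / (N - 1)"
    and "\<bar>2 * 1 * (1 * g - L) / (1 - L^2)\<bar> \<le> 2 / (N - 1)"
proof -
  have L1: "L > 1" using N L by simp
  have pos: "L^2 - 1 \<noteq> 0"
  proof -
    have "L^2 - 1 = (L - 1) * (L + 1)" by (simp add: power2_eq_square algebra_simps)
    thus ?thesis using L1 by simp
  qed
  have "2 * L * (L * g - 1) / (L^2 - 1) - 2 * g = 2 * (g - L) / (L^2 - 1)"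
    using pos by (simp add: field_simps power2_eq_square)
  thus "\<bar>2 * L * (L * g - 1) / (L^2 - 1) - 2 * g\<bar> \<le> 2 / (N - 1)" using hb3[OF assms] by simp
  have "2 * 1 * (1 * g - L) / (1 - L^2) = - (2 * (g - L) / (L^2 - 1))"
    using pos by (simp add: field_simps)
  thus "\<bar>2 * 1 * (1 * g - L) / (1 - L^2)\<bar> \<le> 2 / (N - 1)" using hb3[OF assms] by simp
qed



lemma small1:
  fixes x :: real assumes x: "x \<ge> 3"
  shows "(x - 1) * (1 / (8 * x^2))^2 + 2 * (2 * x - 3) * x * (1 / (8 * x^2)) < 1"
proof -
  have x0: "x > 0" using x by simp
  have a: "(x - 1) * (1 / (8 * x^2))^2 \<le> 1 / 64"
  proof -
    have "(x - 1) * (1 / (8 * x^2))^2 = (x - 1) / (64 * (x^2 * x^2))" by (simp add: power2_eq_square field_simps)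
    also have "\<dots> \<le> 1 / 64"
    proof -
      have "1 \<le> x^2" using x by (simp add: power2_eq_square) (metis x less_1_mult linorder_not_le numeral_le_one_iff order.trans less_eq_real_def semiring_norm(70) one_le_numeral)
      hence "x^2 \<le> x^2 * x^2" using x by simp
      moreover have "x \<le> x^2" using x by (simp add: power2_eq_square)
      ultimately have "x - 1 \<le> x^2 * x^2" by linarith
      thus ?thesis using x0 by (simp add: divide_simps)
    qed
    finally show ?thesis .
  qed
  have b: "2 * (2 * x - 3) * x * (1 / (8 * x^2)) = (2 * x - 3) / (4 * x)" using x0 by (simp add: power2_eq_square field_simps)
  have c: "(2 * x - 3) / (4 * x) < 1 / 2" using x0 by (simp add: divide_simps)
  show ?thesis using a b c by linarith
qed

lemma small2:
  fixes x :: real assumes x: "x \<ge> 3"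
  shows "(x - 1) * (1 / (8 * x^2))^2 + 2 * (2 * x - 3) * (x - 1) * (1 / (8 * x^2)) < 2 * x - 3"
proof -
  have x0: "x > 0" using x by simp
  have a: "(x - 1) * (1 / (8 * x^2))^2 + 2 * (2 * x - 3) * x * (1 / (8 * x^2)) < 1" by (rule small1[OF x])
  have "2 * (2 * x - 3) * (x - 1) * (1 / (8 * x^2)) \<le> 2 * (2 * x - 3) * x * (1 / (8 * x^2))"
    using x by (intro mult_right_mono mult_left_mono) auto
  thus ?thesis using a x by linarith
qed

theorem mainTheorem16:
  fixes n :: nat
  assumes "n \<ge> 3"
  shows "Theta n \<noteq> {}"
proof -
  have n3: "n \<ge> 3" by fact
  have rn: "real n \<ge> 3" using n3 by simp
  define c where "c = 2 * real n - 3"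
  define g where "g = sqrt (2 / c)"
  define N :: real where "N = 16 * (real n)^2 + 1"
  define lam where "lam = (\<lambda>q. if q = n - 1 then 1 else N ^ (q+1))"
  define G where "G = arr 1 1 g n"
  define e where "e = 2 / (N - 1)"
  define m where "m = n - 1"
  have nm: "n = Suc m" using n3 m_def by simp
  have c3: "c \<ge> 3" using rn c_def by simp
  have c0: "c > 0" using c3 by simp
  have rm: "real m = real n - 1" using nm by simp
  have rsm: "real (Suc m) = real n" using nm by simp
  have g0: "g \<ge> 0" unfolding g_def using c3 by simp
  have gsq: "g^2 = 2 / c" unfolding g_def using c3 by simp
  have cg: "c * g^2 = 2" using gsq c3 by simp
  have g2c: "g^2 * (2 * real n - 3) = 2" using cg c_def by (simp add: mult.commute)
  have g1: "g \<le> 1" unfolding g_def using c3 by simp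
  have N1: "N > 1" unfolding N_def using rn by simp
  have e_eq: "e = 1 / (8 * (real n)^2)" unfolding e_def N_def by simp
  have e0: "e \<ge> 0" unfolding e_eq by simp
  have lampos: "lam q > 0" for q unfolding lam_def using N1 by simp
  have lamN: "N \<le> lam q" if "q < m" for q
  proof -
    have "N ^ 1 \<le> N ^ (q + 1)" using N1 by (intro power_increasing) auto
    thus ?thesis using that m_def by (simp add: lam_def)
  qed
  have lamm: "lam m = 1" unfolding lam_def m_def by simp
  have sep: "N * lam p \<le> lam q \<or> N * lam q \<le> lam p" if "p < n" "q < n" "p \<noteq> q" for p q
  proof (cases "p = m \<or> q = m")
    case True
    then show ?thesis
    proof
      assume "p = m" thus ?thesis using lamN[of q] lamm that nm by auto
    next
      assume "q = m" thus ?thesis using lamN[of p] lamm that nm by auto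
    qed
  next
    case False
    hence pq: "p < m" "q < m" using that nm by auto
    have lp: "lam p = N ^ (p+1)" and lq: "lam q = N ^ (q+1)" using pq m_def by (auto simp: lam_def)
    show ?thesis
    proof (cases "p < q")
      case True
      have "N * N ^ (p+1) = N ^ (p + 2)" by simp
      also have "\<dots> \<le> N ^ (q+1)" using N1 True by (intro power_increasing) auto
      finally show ?thesis using lp lq by simp
    next
      case False
      hence "q < p" using that by simp
      have "N * N ^ (q+1) = N ^ (q + 2)" by simp
      also have "\<dots> \<le> N ^ (p+1)" using N1 \<open>q < p\<close> by (intro power_increasing) auto
      finally show ?thesis using lp lq by simp
    qed
  qed
  have lamdist: "lam p \<noteq> lam q \<and> lam p \<noteq> - lam q" if "p < n" "q < n" "p \<noteq> q" for p q
  proof -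
    have "lam p < N * lam p" "lam q < N * lam q" using lampos N1 by auto
    thus ?thesis using sep[OF that] lampos[of p] lampos[of q] by auto
  qed
  have Gc: "G \<in> carrier_mat n n" unfolding G_def arr_def by simp
  have GT: "G\<^sup>T = G" unfolding G_def by (rule eq_matI) (auto simp: arr_def)
  have Gd: "\<forall>p<n. G $$ (p,p) = 1" unfolding G_def arr_def by simp
  have detG: "det G \<noteq> 0"
  proof -
    have "det G = 1 - real (n - 1) * g^2" unfolding G_def by (rule det_arr1) (use n3 in simp)
    also have "\<dots> = 1 - (real n - 1) * (2 / c)" using gsq n3 by simp
    finally have "det G = 1 - (real n - 1) * (2 / c)" .
    moreover have "(real n - 1) * (2 / c) \<noteq> 1" using c3 c_def by (simp add: divide_simps)
    ultimately show ?thesis by simp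
  qed
  define r where "r = sqrt (real (n - 1) * g^2)"
  have r2: "r^2 = real (n - 1) * g^2" unfolding r_def by simp
  have r1: "r > 1"
  proof -
    have "real (n - 1) * g^2 = (real n - 1) * (2 / c)" using gsq n3 by simp
    also have "\<dots> > 1" using c3 c_def by (simp add: divide_simps)
    finally have "real (n - 1) * g^2 > 1" .
    thus ?thesis unfolding r_def by (metis power_one real_less_rsqrt)
  qed
  have inert: "neg_inertia G = 1" "pos_inertia G > 0"
    unfolding G_def using inertia_arr[OF n3 r2 r1] by auto
  have minors: "det (submatrix G S S) > 0" if S: "S \<subseteq> {0..<n}" "2 \<le> card S" "card S \<le> n - 1" for S
  proof -
    have "submatrix G S S = arr 1 1 (if n - 1 \<in> S then g else 0) (card S)"
      unfolding G_def by (rule submatrix_arr) (use S n3 in auto)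
    hence "det (submatrix G S S) = 1 - real (card S - 1) * (if n - 1 \<in> S then g else 0)^2"
      using det_arr1[of "card S"] S by simp
    moreover have "real (card S - 1) * g^2 < 1"
    proof -
      have "real (card S - 1) * g^2 = real (card S - 1) * (2 / c)" using gsq by simp
      also have "\<dots> < 1" using S c3 c_def by (simp add: divide_simps of_nat_diff)
      finally show ?thesis .
    qed
    ultimately show ?thesis by auto
  qed
  let ?H = "H_mat n lam G"
  have Hidx: "?H $$ (p,q) = (if p = q then 1 else 2 * lam p * (lam p * G $$ (p,q) - lam q) / ((lam p)^2 - (lam q)^2))"
    if "p < n" "q < n" for p q
    using that unfolding H_mat_def by simp
  have quad: "(\<Sum>q<n. \<Sum>r<n. Ginv n g $$ (q,r) * ?H $$ (p,q) * ?H $$ (p,r)) < 0" if p: "p < n" for p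
  proof -
    define h where "h = (\<lambda>q. ?H $$ (p,q))"
    have "(\<Sum>q<n. \<Sum>r<n. Ginv n g $$ (q,r) * ?H $$ (p,q) * ?H $$ (p,r))
        = (\<Sum>q<n - 1. (h q)^2) - (2 * real n - 3) * (\<Sum>q<n. uu n g q * h q)^2"
      unfolding h_def by (rule quad_Ginv)
    also have "(\<Sum>q<n. uu n g q * h q) = g * (\<Sum>q<m. h q) - h m"
    proof -
      have "(\<Sum>q<n. uu n g q * h q) = (\<Sum>q<m. uu n g q * h q) + uu n g m * h m" unfolding nm by simp
      also have "(\<Sum>q<m. uu n g q * h q) = (\<Sum>q<m. g * h q)"
        by (intro sum.cong) (auto simp: uu_def m_def)
      also have "uu n g m = -1" by (simp add: uu_def m_def)
      finally show ?thesis by (simp add: sum_distrib_left)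
    qed
    finally have Qeq: "(\<Sum>q<n. \<Sum>r<n. Ginv n g $$ (q,r) * ?H $$ (p,q) * ?H $$ (p,r))
        = (\<Sum>q<m. (h q)^2) - c * (g * (\<Sum>q<m. h q) - h m)^2" unfolding c_def m_def .
    show ?thesis
    proof (cases "p = m")
      case False
      hence pm: "p < m" using p nm by simp
      have xp: "h p = 1" unfolding h_def using Hidx[OF p p] by simp
      have xq: "\<bar>h q\<bar> \<le> e" if q: "q < m" "q \<noteq> p" for q
      proof -
        have qn: "q < n" using q nm by simp
        have "G $$ (p,q) = 0" using pm q nm unfolding G_def arr_def by auto
        hence "h q = 2 * lam p * (lam p * 0 - lam q) / ((lam p)^2 - (lam q)^2)"
          unfolding h_def using Hidx[OF p qn] q by simp
        thus ?thesis unfolding e_def using hb1[OF lampos lampos sep[OF p qn] N1] q by auto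
      qed
      have xm: "\<bar>h m - 2 * g\<bar> \<le> e"
      proof -
        have mn: "m < n" using nm by simp
        have "G $$ (p,m) = g" using pm nm unfolding G_def arr_def by auto
        hence "h m = 2 * lam p * (lam p * g - 1) / ((lam p)^2 - 1)"
          unfolding h_def using Hidx[OF p mn] pm lamm by simp
        thus ?thesis unfolding e_def using hb2(1)[OF N1 lamN[OF pm] g0 g1] by simp
      qed
      have small: "real m * e^2 + 2 * c * real (Suc m) * e < 1"
        using small1[OF rn] unfolding rm rsm e_eq c_def .
      show ?thesis unfolding Qeq by (rule rowQ_other[OF pm xp xq xm e0 g0 g1 c0 cg small])
    next
      case True
      have xq: "\<bar>h q\<bar> \<le> e" if q: "q < m" for q
      proof -
        have qn: "q < n" using q nm by simp
        have "G $$ (m,q) = g" using q nm unfolding G_def arr_def by auto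
        hence "h q = 2 * 1 * (1 * g - lam q) / (1 - (lam q)^2)"
          unfolding h_def using Hidx[OF p qn] q True lamm by simp
        thus ?thesis unfolding e_def using hb2(2)[OF N1 lamN[OF q] g0 g1] by simp
      qed
      have hm: "h m = 1" unfolding h_def using Hidx[OF p p] True by simp
      have small: "real m * e^2 + 2 * c * real m * e < c"
        using small2[OF rn] unfolding rm e_eq c_def .
      show ?thesis unfolding Qeq hm by (rule rowQ_last[OF xq e0 g0 g1 c0 small])
    qed
  qed
  have ex: "\<exists>Ginv\<in>carrier_mat n n. G * Ginv = 1\<^sub>m n \<and> Ginv * G = 1\<^sub>m n \<and>
        (\<forall>p<n. (\<Sum>q<n. \<Sum>r<n. Ginv $$ (q,r) * ?H $$ (p,q) * ?H $$ (p,r)) < 0)"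
  proof (intro bexI[of _ "Ginv n g"] conjI allI impI)
    show "G * Ginv n g = 1\<^sub>m n" unfolding G_def by (rule arr_Ginv) (use n3 g2c in auto)
    show "Ginv n g * G = 1\<^sub>m n" unfolding G_def by (rule Ginv_G) (use n3 g2c in auto)
    show "Ginv n g \<in> carrier_mat n n" by (simp add: Ginv_def)
  qed (rule quad)
  have d1: "\<forall>p<n. \<forall>q<n. p \<noteq> q \<longrightarrow> lam p \<noteq> lam q \<and> lam p \<noteq> - lam q" using lamdist by blast
  have d0: "\<forall>p<n. lam p \<noteq> 0" using lampos by (metis less_irrefl)
  have mi: "\<forall>S. S \<subseteq> {0..<n} \<longrightarrow> 2 \<le> card S \<longrightarrow> card S \<le> n - 1 \<longrightarrow> det (submatrix G S S) > 0"
    using minors by blast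
  have "in_Theta n lam G"
    unfolding in_Theta_def using d0 d1 Gc GT Gd detG inert mi ex by (intro conjI) auto
  thus ?thesis unfolding Theta_def by auto
qed

end
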